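(* Let $\Omega=(a,b)$ be a bounded interval, $\lambda\ge0$, $0\le q<\gamma\le1$, let $u\in C^1(\Omega)$ with $u(a)=0$, and let $v\in C_0^\infty(\Omega)$. Then $$\left({}_a\mathbb{D}_x^{\gamma,\lambda}u,\ v\right)=\left({}_a\mathbb{D}_x^{q,\lambda}u,\ {}_x\mathbb{D}_b^{\gamma-q,\lambda}v\right),$$ where $(\cdot,\cdot)$ is the $L^2(\Omega)$ inner product.
   Context: For $n-1\le\mu<n$ ($n$ a positive integer) and $\lambda\ge0$, ${}_a\mathbb{D}_x^{\mu,\lambda}u(x)=\frac{e^{-\lambda x}}{\Gamma(n-\mu)}\frac{d^n}{dx^n}\int_a^x\frac{e^{\lambda\xi}u(\xi)}{(x-\xi)^{\mu-n+1}}d\xi$ and ${}_x\mathbb{D}_b^{\mu,\lambda}u(x)=\frac{(-1)^ne^{\lambda x}}{\Gamma(n-\mu)}\frac{d^n}{dx^n}\int_x^b\frac{e^{-\lambda\xi}u(\xi)}{(\xi-x)^{\mu-n+1}}d\xi$ (for order $0$ these reduce to the identity; for order $1$ to $\frac{d}{dx}+\lambda$ and $-(\frac{d}{dx}-\lambda)$ respectively). *)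

theory Defs
  imports "HOL-Analysis.Analysis"
begin

definition tfd_n :: "real \<Rightarrow> nat" where
  "tfd_n mu = nat \<lfloor>mu\<rfloor> + 1"

definition left_tfd :: "real \<Rightarrow> real \<Rightarrow> real \<Rightarrow> (real \<Rightarrow> real) \<Rightarrow> real \<Rightarrow> real" where
  "left_tfd a mu lam u x =
     (let n = tfd_n mu in
      exp (- lam * x) / Gamma (real n - mu) *
      (deriv ^^ n)
        (\<lambda>y. integral {a..y} (\<lambda>\<xi>. exp (lam * \<xi>) * u \<xi> / (y - \<xi>) powr (mu - real n + 1))) x)"

definition right_tfd :: "real \<Rightarrow> real \<Rightarrow> real \<Rightarrow> (real \<Rightarrow> real) \<Rightarrow> real \<Rightarrow> real" where
  "right_tfd b mu lam u x =
     (let n = tfd_n mu in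
      (-1) ^ n * exp (lam * x) / Gamma (real n - mu) *
      (deriv ^^ n)
        (\<lambda>y. integral {y..b} (\<lambda>\<xi>. exp (- lam * \<xi>) * u \<xi> / (\<xi> - y) powr (mu - real n + 1))) x)"

definition L2_inner :: "real \<Rightarrow> real \<Rightarrow> (real \<Rightarrow> real) \<Rightarrow> (real \<Rightarrow> real) \<Rightarrow> real" where
  "L2_inner a b f g = integral {a..b} (\<lambda>x. f x * g x)"

definition C1_on_interval :: "real \<Rightarrow> real \<Rightarrow> (real \<Rightarrow> real) \<Rightarrow> bool" where
  "C1_on_interval a b u \<longleftrightarrow>
     (\<exists>u'. continuous_on {a..b} u' \<and>
           (\<forall>x\<in>{a..b}. (u has_real_derivative u' x) (at x within {a..b})))"

definition C0_inf :: "real \<Rightarrow> real \<Rightarrow> (real \<Rightarrow> real) \<Rightarrow> bool" where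
  "C0_inf a b v \<longleftrightarrow>
     (\<forall>k x. (deriv ^^ k) v differentiable (at x)) \<and>
     (\<exists>c d. a < c \<and> c \<le> d \<and> d < b \<and> (\<forall>x. x \<notin> {c..d} \<longrightarrow> v x = 0))"

end

theory Submission
  imports Defs
begin


lemma kernel_upper:
  fixes a y e :: real
  assumes "a \<le> y" "0 \<le> e" "e < 1"
  shows "((\<lambda>\<xi>. (y - \<xi>) powr (-e)) has_integral ((y - a) powr (1 - e) / (1 - e))) {a..y}"
proof -
  have "((\<lambda>\<xi>. (y - \<xi>) powr (-e)) has_integral
        ((\<lambda>\<xi>. - ((y - \<xi>) powr (1 - e) / (1 - e))) y - (\<lambda>\<xi>. - ((y - \<xi>) powr (1 - e) / (1 - e))) a)) {a..y}"
  proof (rule fundamental_theorem_of_calculus_interior)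
    show "a \<le> y" by fact
    show "continuous_on {a..y} (\<lambda>\<xi>. - ((y - \<xi>) powr (1 - e) / (1 - e)))"
      using assms by (intro continuous_intros continuous_on_powr') auto
    fix x assume x: "x \<in> {a<..<y}"
    have "((\<lambda>\<xi>. - ((y - \<xi>) powr (1 - e) / (1 - e))) has_real_derivative
           - ((1 - e) * (y - x) powr (1 - e - 1) * (-1) / (1 - e))) (at x)"
      using x by (auto intro!: derivative_eq_intros)
    moreover have "- ((1 - e) * (y - x) powr (1 - e - 1) * (-1) / (1 - e)) = (y - x) powr (-e)"
      using assms by simp
    ultimately show "((\<lambda>\<xi>. - ((y - \<xi>) powr (1 - e) / (1 - e))) has_vector_derivative (y - x) powr (-e)) (at x)"
      by (simp add: has_real_derivative_iff_has_vector_derivative)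
  qed
  then show ?thesis by simp
qed

lemma kernel_lower:
  fixes s b e :: real
  assumes "s \<le> b" "0 \<le> e" "e < 1"
  shows "((\<lambda>t. (t - s) powr (-e)) has_integral ((b - s) powr (1 - e) / (1 - e))) {s..b}"
proof -
  have "((\<lambda>t. (t - s) powr (-e)) has_integral
        ((\<lambda>t. (t - s) powr (1 - e) / (1 - e)) b - (\<lambda>t. (t - s) powr (1 - e) / (1 - e)) s)) {s..b}"
  proof (rule fundamental_theorem_of_calculus_interior)
    show "s \<le> b" by fact
    show "continuous_on {s..b} (\<lambda>t. (t - s) powr (1 - e) / (1 - e))"
      using assms by (intro continuous_intros continuous_on_powr') auto
    fix x assume x: "x \<in> {s<..<b}"
    have "((\<lambda>t. (t - s) powr (1 - e) / (1 - e)) has_real_derivative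
           ((1 - e) * (x - s) powr (1 - e - 1) * 1 / (1 - e))) (at x)"
      using x by (auto intro!: derivative_eq_intros)
    moreover have "((1 - e) * (x - s) powr (1 - e - 1) * 1 / (1 - e)) = (x - s) powr (-e)"
      using assms by simp
    ultimately show "((\<lambda>t. (t - s) powr (1 - e) / (1 - e)) has_vector_derivative (x - s) powr (-e)) (at x)"
      by (simp add: has_real_derivative_iff_has_vector_derivative)
  qed
  then show ?thesis by simp
qed



lemma kernel_lower_set_integrable:
  fixes s b e :: real
  assumes "0 \<le> e" "e < 1"
  shows "set_integrable lborel {s..b} (\<lambda>t. (t - s) powr (-e))"
proof (cases "s \<le> b")
  case True
  have "(\<lambda>t. (t - s) powr (-e)) absolutely_integrable_on {s..b}"
    using kernel_lower[OF True assms] by (intro nonnegative_absolutely_integrable_1) auto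
  then have "set_integrable lebesgue {s..b} (\<lambda>t. (t - s) powr (-e))"
    by (simp add: set_integrable_def)
  then show ?thesis unfolding set_integrable_def
    by (subst (asm) integrable_completion) auto
next
  case False
  then show ?thesis by (simp add: set_integrable_def)
qed



lemma GF:
  fixes A B :: "real \<Rightarrow> real" and a b e :: real
  assumes ab: "a \<le> b" and e: "0 \<le> e" "e < 1"
    and Am[measurable]: "A \<in> borel_measurable borel" and Ai: "set_integrable lborel {a..b} A"
    and Bc: "continuous_on UNIV B"
  shows "integral {a..b} (\<lambda>s. A s * integral {s..b} (\<lambda>t. B t * (t - s) powr (-e))) =
         integral {a..b} (\<lambda>t. B t * integral {a..t} (\<lambda>s. A s * (t - s) powr (-e)))"
proof -
  have Bm[measurable]: "B \<in> borel_measurable borel" using borel_measurable_continuous_onI[OF Bc] .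
  have "bounded (B ` {a..b})"
    by (intro compact_imp_bounded compact_continuous_image continuous_on_subset[OF Bc]) auto
  then obtain MB where MBpos: "MB > 0" and MB: "\<And>t. t \<in> {a..b} \<Longrightarrow> \<bar>B t\<bar> \<le> MB"
    unfolding bounded_pos by auto
  define F where "F s t = (if a \<le> s \<and> s \<le> t \<and> t \<le> b then A s * B t * (t - s) powr (-e) else 0)" for s t
  have Fm[measurable]: "(\<lambda>(s,t). F s t) \<in> borel_measurable (lborel \<Otimes>\<^sub>M lborel)"
    unfolding F_def by measurable
  define C where "C = MB * (b - a) powr (1 - e) / (1 - e)"
  have SI: "set_integrable lborel {s..b} (\<lambda>t. B t * (t - s) powr (-e))" if s: "s \<in> {a..b}" for s
  proof (rule set_integrable_bound[where f="\<lambda>t. MB * (t - s) powr (-e)"])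
    show "set_integrable lborel {s..b} (\<lambda>t. MB * (t - s) powr (-e))"
      using kernel_lower_set_integrable[OF e, of s b] by (rule set_integrable_mult_right)
    show "set_borel_measurable lborel {s..b} (\<lambda>t. B t * (t - s) powr (-e))"
      unfolding set_borel_measurable_def by measurable
    show "AE t in lborel. t \<in> {s..b} \<longrightarrow> norm (B t * (t - s) powr (-e)) \<le> norm (MB * (t - s) powr (-e))"
      using s MB MBpos by (auto intro!: AE_I2 simp: abs_mult intro!: mult_right_mono)
  qed
  have Fs: "F s t = indicator {a..b} s * A s * (indicator {s..b} t * (B t * (t - s) powr (-e)))" for s t
    by (auto simp: F_def indicator_def)
  have inner1: "integrable lborel (\<lambda>t. F s t)" for s
  proof (cases "s \<in> {a..b}")
    case True
    then show ?thesis using SI[OF True] unfolding Fs set_integrable_def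
      by (intro integrable_mult_right) simp
  next
    case False
    then show ?thesis unfolding Fs by simp
  qed
  have kint: "(LINT t|lborel. indicator {s..b} t * (t - s) powr (-e)) = (b - s) powr (1 - e) / (1 - e)"
    if "s \<in> {a..b}" for s
  proof -
    have "(LINT t|lborel. indicator {s..b} t * (t - s) powr (-e)) = integral {s..b} (\<lambda>t. (t - s) powr (-e))"
      using set_borel_integral_eq_integral(2)[OF kernel_lower_set_integrable[OF e, of s b]]
      by (simp add: set_lebesgue_integral_def)
    also have "\<dots> = (b - s) powr (1 - e) / (1 - e)"
      using kernel_lower[of s b e] that e by (auto intro: integral_unique)
    finally show ?thesis .
  qed
  have bnd: "norm (LINT t|lborel. norm (F s t)) \<le> norm (indicator {a..b} s * A s * C)" for s
  proof (cases "s \<in> {a..b}")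
    case True
    have "(LINT t|lborel. norm (F s t)) \<le> (LINT t|lborel. \<bar>A s\<bar> * MB * (indicator {s..b} t * (t - s) powr (-e)))"
    proof (rule integral_mono)
      show "integrable lborel (\<lambda>t. norm (F s t))" using inner1 by simp
      show "integrable lborel (\<lambda>t. \<bar>A s\<bar> * MB * (indicator {s..b} t * (t - s) powr (-e)))"
        using kernel_lower_set_integrable[OF e, of s b] unfolding set_integrable_def
        by (intro integrable_mult_right) simp
      fix t
      show "norm (F s t) \<le> \<bar>A s\<bar> * MB * (indicator {s..b} t * (t - s) powr (-e))"
        using True MB[of t] by (auto simp: Fs indicator_def abs_mult mult.assoc intro!: mult_left_mono mult_right_mono)
    qed
    also have "\<dots> = \<bar>A s\<bar> * MB * ((b - s) powr (1 - e) / (1 - e))"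
      using kint[OF True] by simp
    also have "\<dots> \<le> \<bar>A s\<bar> * C"
      unfolding C_def using True e MBpos
      by (auto simp: mult.assoc intro!: mult_left_mono divide_right_mono powr_mono2)
    finally have "(LINT t|lborel. norm (F s t)) \<le> \<bar>A s\<bar> * C" .
    moreover have "0 \<le> (LINT t|lborel. norm (F s t))" by simp
    moreover have "C \<ge> 0" unfolding C_def using MBpos e by auto
    ultimately show ?thesis using True by (simp add: abs_mult)
  next
    case False
    then show ?thesis by (simp add: Fs)
  qed
  have I1: "integrable lborel (\<lambda>s. LINT t|lborel. norm (F s t))"
  proof (rule Bochner_Integration.integrable_bound[OF _ _ AE_I2[OF bnd]])
    show "integrable lborel (\<lambda>s. indicator {a..b} s * A s * C)"
      using Ai unfolding set_integrable_def by (intro integrable_mult_left) simp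
    show "(\<lambda>s. LINT t|lborel. norm (F s t)) \<in> borel_measurable lborel"
      by measurable
  qed
  have FI: "integrable (lborel \<Otimes>\<^sub>M lborel) (\<lambda>(s,t). F s t)"
    by (rule lborel_pair.Fubini_integrable) (use Fm I1 inner1 in auto)
  have eqL: "(LINT t|lborel. F s t) = indicator {a..b} s * (A s * integral {s..b} (\<lambda>t. B t * (t - s) powr (-e)))" for s
  proof (cases "s \<in> {a..b}")
    case True
    have "(LINT t|lborel. F s t) = A s * (LINT t|lborel. indicator {s..b} t *\<^sub>R (B t * (t - s) powr (-e)))"
      using True by (simp add: Fs)
    also have "\<dots> = A s * integral {s..b} (\<lambda>t. B t * (t - s) powr (-e))"
      using set_borel_integral_eq_integral(2)[OF SI[OF True]] by (simp add: set_lebesgue_integral_def)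
    finally show ?thesis using True by simp
  next
    case False
    then show ?thesis by (simp add: Fs)
  qed
  have intL: "integrable lborel (\<lambda>s. LINT t|lborel. F s t)"
    using lborel_pair.integrable_fst[OF FI] by simp
  have LHS: "integral {a..b} (\<lambda>s. A s * integral {s..b} (\<lambda>t. B t * (t - s) powr (-e))) =
       (LINT s|lborel. LINT t|lborel. F s t)"
  proof -
    have si: "set_integrable lborel {a..b} (\<lambda>s. A s * integral {s..b} (\<lambda>t. B t * (t - s) powr (-e)))"
      using intL unfolding set_integrable_def eqL by simp
    show ?thesis
      using set_borel_integral_eq_integral(2)[OF si] unfolding set_lebesgue_integral_def eqL
      by simp
  qed
  define H where "H t = B t * integral {a..t} (\<lambda>s. A s * (t - s) powr (-e))" for t
  have AEH: "AE t in lborel. (LINT s|lborel. F s t) = indicator {a..b} t * H t"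
    using lborel_pair.AE_integrable_snd[OF FI]
  proof eventually_elim
    case (elim t)
    show ?case
    proof (cases "t \<in> {a..b}")
      case True
      have Ft: "F s t = B t * (indicator {a..t} s *\<^sub>R (A s * (t - s) powr (-e)))" for s
        using True by (auto simp: F_def indicator_def)
      show ?thesis
      proof (cases "B t = 0")
        case True
        then show ?thesis by (simp add: Ft H_def)
      next
        case False
        have "integrable lborel (\<lambda>s. inverse (B t) * F s t)"
          using elim by (intro integrable_mult_right)
        then have si: "set_integrable lborel {a..t} (\<lambda>s. A s * (t - s) powr (-e))"
          unfolding set_integrable_def Ft using False by (simp add: field_simps)
        have "(LINT s|lborel. F s t) = B t * (LINT s|lborel. indicator {a..t} s *\<^sub>R (A s * (t - s) powr (-e)))"
          unfolding Ft by simp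
        also have "\<dots> = H t"
          using set_borel_integral_eq_integral(2)[OF si] by (simp add: set_lebesgue_integral_def H_def)
        finally show ?thesis using \<open>t \<in> {a..b}\<close> by simp
      qed
    next
      case False
      then have "\<And>s. F s t = 0" by (auto simp: F_def)
      then show ?thesis using False by simp
    qed
  qed
  have intR: "integrable lborel (\<lambda>t. LINT s|lborel. F s t)"
    using lborel_pair.integrable_snd[OF FI] by simp
  have Rz: "(LINT s|lborel. F s t) = indicator {a..b} t * (LINT s|lborel. F s t)" for t
  proof (cases "t \<in> {a..b}")
    case False
    then have "\<And>s. F s t = 0" by (auto simp: F_def)
    then show ?thesis by simp
  qed simp
  have RHS1: "integral {a..b} (\<lambda>t. LINT s|lborel. F s t) = (LINT t|lborel. LINT s|lborel. F s t)"
  proof -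
    have si: "set_integrable lborel {a..b} (\<lambda>t. LINT s|lborel. F s t)"
      using intR unfolding set_integrable_def by (subst (asm) Rz) simp
    show ?thesis
      using set_borel_integral_eq_integral(2)[OF si] unfolding set_lebesgue_integral_def
      by (subst (2) Rz) simp
  qed
  obtain N where N: "N \<in> null_sets lborel" "{t \<in> space lborel. \<not> ((LINT s|lborel. F s t) = indicator {a..b} t * H t)} \<subseteq> N"
    using AEH[unfolded eventually_ae_filter] by blast
  have negN: "negligible N"
    using N(1) by (simp add: negligible_iff_null_sets null_sets_completionI)
  have RHS2: "integral {a..b} H = integral {a..b} (\<lambda>t. LINT s|lborel. F s t)"
  proof (rule integral_spike[OF negN])
    fix t assume "t \<in> {a..b} - N"
    then have "t \<notin> {t \<in> space lborel. (LINT s|lborel. F s t) \<noteq> indicator {a..b} t * H t}"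
      using N(2) by blast
    then have "(LINT s|lborel. F s t) = indicator {a..b} t * H t" by simp
    then show "(LINT s|lborel. F s t) = H t" using \<open>t \<in> {a..b} - N\<close> by simp
  qed
  show ?thesis
    using LHS RHS1 RHS2 lborel_pair.Fubini_integral[OF FI] unfolding H_def by simp
qed


lemma beta_kernel:
  fixes s t q \<beta> :: real
  assumes st: "s \<le> t" and q: "0 \<le> q" "q < 1" and \<beta>: "0 \<le> \<beta>" "\<beta> < 1"
  shows "integral {s..t} (\<lambda>x. (x - s) powr (-q) * (t - x) powr (-\<beta>)) = Beta (1 - q) (1 - \<beta>) * (t - s) powr (1 - q - \<beta>)"
proof (cases "s = t")
  case True
  then show ?thesis by simp
next
  case False
  with st have st': "s < t" by simp
  define f where "f \<tau> = \<tau> powr (-q) * (1 - \<tau>) powr (-\<beta>)" for \<tau> :: real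
  have B: "(f has_integral Beta (1 - q) (1 - \<beta>)) (cbox 0 1)"
    using has_integral_Beta_real[of "1 - q" "1 - \<beta>"] q \<beta> unfolding f_def[abs_def] by simp
  define m where "m = 1 / (t - s)"
  define c where "c = - s / (t - s)"
  have m: "m > 0" using st' by (simp add: m_def)
  have A: "((\<lambda>x. f (m *\<^sub>R x + c)) has_integral (Beta (1 - q) (1 - \<beta>) /\<^sub>R m ^ DIM(real)))
           (cbox ((0 - c) /\<^sub>R m) ((1 - c) /\<^sub>R m))"
    by (rule has_integral_affinity'[OF B m])
  have e1: "(0 - c) /\<^sub>R m = s" and e2: "(1 - c) /\<^sub>R m = t"
    using st' by (simp_all add: m_def c_def field_simps)
  have e3: "Beta (1 - q) (1 - \<beta>) /\<^sub>R m ^ DIM(real) = Beta (1 - q) (1 - \<beta>) * (t - s)"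
    by (simp add: m_def)
  have A': "((\<lambda>x. f (m * x + c)) has_integral (Beta (1 - q) (1 - \<beta>) * (t - s))) {s..t}"
    using A unfolding e1 e2 e3 by simp
  define K where "K = (t - s) powr (-q) * (t - s) powr (-\<beta>)"
  have eq: "(x - s) powr (-q) * (t - x) powr (-\<beta>) = K * f (m * x + c)" if x: "x \<in> {s..t}" for x
  proof -
    have 1: "m * x + c = (x - s) / (t - s)"
      by (simp add: m_def c_def diff_divide_distrib)
    have 2: "1 - (x - s) / (t - s) = (t - x) / (t - s)"
      using st' by (simp add: field_simps)
    have "f (m * x + c) = ((x - s) / (t - s)) powr (-q) * ((t - x) / (t - s)) powr (-\<beta>)"
      unfolding f_def 2[symmetric] 1 ..
    also have "\<dots> = ((x - s) powr (-q) / (t - s) powr (-q)) * ((t - x) powr (-\<beta>) / (t - s) powr (-\<beta>))"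
      using x st' by (simp add: powr_divide)
    finally show ?thesis unfolding K_def using st' by (simp add: field_simps)
  qed
  have "((\<lambda>x. (x - s) powr (-q) * (t - x) powr (-\<beta>)) has_integral K * (Beta (1 - q) (1 - \<beta>) * (t - s))) {s..t}"
    using has_integral_mult_right[OF A', of K] by (subst has_integral_cong[OF eq]) auto
  moreover have "K * (Beta (1 - q) (1 - \<beta>) * (t - s)) = Beta (1 - q) (1 - \<beta>) * (t - s) powr (1 - q - \<beta>)"
  proof -
    have "(t - s) powr (1 - q - \<beta>) = (t - s) powr 1 * ((t - s) powr (-q) * (t - s) powr (-\<beta>))"
      unfolding powr_add[symmetric] by (simp add: algebra_simps)
    then show ?thesis using st' by (simp add: K_def)
  qed
  ultimately show ?thesis by (simp add: integral_unique)
qed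



lemma semigroup:
  fixes \<phi> :: "real \<Rightarrow> real" and s b q \<beta> :: real
  assumes sb: "s \<le> b" and q: "0 \<le> q" "q < 1" and \<beta>: "0 \<le> \<beta>" "\<beta> < 1" and \<phi>: "continuous_on UNIV \<phi>"
  shows "integral {s..b} (\<lambda>x. (x - s) powr (-q) * integral {x..b} (\<lambda>t. \<phi> t * (t - x) powr (-\<beta>))) =
         Beta (1 - q) (1 - \<beta>) * integral {s..b} (\<lambda>t. \<phi> t * (t - s) powr (1 - q - \<beta>))"
proof -
  have "integral {s..b} (\<lambda>x. (x - s) powr (-q) * integral {x..b} (\<lambda>t. \<phi> t * (t - x) powr (-\<beta>))) =
        integral {s..b} (\<lambda>t. \<phi> t * integral {s..t} (\<lambda>x. (x - s) powr (-q) * (t - x) powr (-\<beta>)))"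
    by (rule GF[OF sb \<beta> _ kernel_lower_set_integrable[OF q] \<phi>]) measurable
  also have "\<dots> = integral {s..b} (\<lambda>t. Beta (1 - q) (1 - \<beta>) * (\<phi> t * (t - s) powr (1 - q - \<beta>)))"
    by (rule integral_cong) (use beta_kernel q \<beta> in auto)
  also have "\<dots> = Beta (1 - q) (1 - \<beta>) * integral {s..b} (\<lambda>t. \<phi> t * (t - s) powr (1 - q - \<beta>))"
    by simp
  finally show ?thesis .
qed



lemma left_scaled:
  fixes f :: "real \<Rightarrow> real" and a y e :: real
  assumes ay: "a < y" and e: "0 \<le> e" "e < 1" and fc: "continuous_on {a..y} f"
  shows "((\<lambda>\<xi>. f \<xi> * (y - \<xi>) powr (-e)) has_integral
          ((1 / (1 - e)) * (y - a) powr (1 - e) * integral {0..1} (\<lambda>\<theta>. f (y - (y - a) * \<theta> powr (1 / (1 - e)))))) {a..y}"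
proof -
  define p where "p = 1 / (1 - e)"
  have p: "p \<ge> 1" "(1 - e) * p = 1" using e by (auto simp: p_def field_simps)
  define g where "g \<xi> = ((y - \<xi>) / (y - a)) powr (1 - e)" for \<xi>
  define g' where "g' \<xi> = - (1 - e) / (y - a) powr (1 - e) * (y - \<xi>) powr (-e)" for \<xi>
  define fh where "fh \<theta> = f (y - (y - a) * \<theta> powr p)" for \<theta>
  have sub1: "(\<lambda>\<theta>. y - (y - a) * \<theta> powr p) ` {0..1} \<subseteq> {a..y}"
  proof (rule image_subsetI)
    fix \<theta> :: real assume "\<theta> \<in> {0..1}"
    then have h: "\<theta> powr p \<le> 1" "0 \<le> \<theta> powr p" using p by (auto intro!: powr_le1)
    have "(y - a) * \<theta> powr p \<le> (y - a) * 1" using h ay by (intro mult_left_mono) auto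
    moreover have "0 \<le> (y - a) * \<theta> powr p" using h ay by simp
    ultimately show "y - (y - a) * \<theta> powr p \<in> {a..y}" by auto
  qed
  have fhc: "continuous_on {0..1} fh"
    unfolding fh_def
    by (rule continuous_on_compose2[OF fc _ sub1]) (use p in \<open>auto intro!: continuous_intros continuous_on_powr'\<close>)
  have gsub: "g ` {a..y} \<subseteq> {0..1}"
  proof (rule image_subsetI)
    fix \<xi> assume "\<xi> \<in> {a..y}"
    then have h: "0 \<le> (y - \<xi>) / (y - a)" "(y - \<xi>) / (y - a) \<le> 1" using ay by auto
    have "\<bar>(y - \<xi>) / (y - a)\<bar> \<le> 1" by (subst abs_of_nonneg[OF h(1)]) (rule h(2))
    then have "((y - \<xi>) / (y - a)) powr (1 - e) \<le> 1" by (intro powr_le1) (use e in auto)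
    then show "g \<xi> \<in> {0..1}" unfolding g_def by simp
  qed
  have gc: "continuous_on {a..y} g"
    unfolding g_def using ay e by (intro continuous_on_powr' continuous_intros) auto
  have gd: "(g has_field_derivative g' \<xi>) (at \<xi> within {a..y})" if "\<xi> \<in> {a..y} - {y}" for \<xi>
  proof -
    have \<xi>: "a \<le> \<xi>" "\<xi> < y" using that by auto
    have d0: "((\<lambda>\<xi>. (y - \<xi>) / (y - a)) has_real_derivative (- 1 / (y - a))) (at \<xi>)"
      by (rule DERIV_cdivide) (auto intro!: derivative_eq_intros)
    have "(g has_field_derivative (1 - e) * ((y - \<xi>) / (y - a)) powr (1 - e - of_nat 1) * (- 1 / (y - a))) (at \<xi>)"
      unfolding g_def by (rule DERIV_fun_powr[OF d0]) (use \<xi> ay in auto)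
    then have "(g has_field_derivative (1 - e) * ((y - \<xi>) / (y - a)) powr (1 - e - 1) * (- 1 / (y - a))) (at \<xi>)"
      by simp
    moreover have "(1 - e) * ((y - \<xi>) / (y - a)) powr (1 - e - 1) * (- 1 / (y - a)) = g' \<xi>"
    proof -
      have h1: "((y - \<xi>) / (y - a)) powr (1 - e - 1) = (y - \<xi>) powr (-e) / (y - a) powr (-e)"
        using \<xi> ay by (simp add: powr_divide)
      have h2: "(y - a) powr (1 - e) = (y - a) * (y - a) powr (-e)"
        using ay by (simp add: powr_diff powr_minus divide_inverse)
      have gen: "\<And>Y Ya d. Ya \<noteq> 0 \<Longrightarrow> d \<noteq> 0 \<Longrightarrow> (1 - e) * (Y / Ya) * (- 1 / d) = - (1 - e) / (d * Ya) * Y"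
        by (simp add: field_simps)
      have "(1 - e) * ((y - \<xi>) / (y - a)) powr (1 - e - 1) * (- 1 / (y - a)) =
            (1 - e) * ((y - \<xi>) powr (-e) / (y - a) powr (-e)) * (- 1 / (y - a))"
        by (simp only: h1)
      also have "\<dots> = - (1 - e) / ((y - a) * (y - a) powr (-e)) * (y - \<xi>) powr (-e)"
        by (rule gen) (use ay in auto)
      also have "\<dots> = g' \<xi>" unfolding g'_def h2 ..
      finally show ?thesis .
    qed
    ultimately show ?thesis by (auto intro: has_field_derivative_at_within)
  qed
  have S: "((\<lambda>\<xi>. g' \<xi> *\<^sub>R fh (g \<xi>)) has_integral (integral {g a..g y} fh - integral {g y..g a} fh)) {a..y}"
    by (rule has_integral_substitution_general[of "{y}", OF _ _ gsub fhc gc gd]) (use ay in auto)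
  have ga: "g a = 1" and gy: "g y = 0" using ay by (auto simp: g_def)
  have fhg: "fh (g \<xi>) = f \<xi>" if "\<xi> \<in> {a..y}" for \<xi>
  proof -
    have "g \<xi> powr p = (y - \<xi>) / (y - a)"
      unfolding g_def using that ay p by (simp add: powr_powr)
    then show ?thesis unfolding fh_def using ay by simp
  qed
  have S': "((\<lambda>\<xi>. g' \<xi> * f \<xi>) has_integral - integral {0..1} fh) {a..y}"
    using S unfolding ga gy by (subst has_integral_cong[of _ _ "\<lambda>\<xi>. g' \<xi> *\<^sub>R fh (g \<xi>)"]) (auto simp: fhg)
  define K where "K = - ((y - a) powr (1 - e)) / (1 - e)"
  have "((\<lambda>\<xi>. K * (g' \<xi> * f \<xi>)) has_integral (K * (- integral {0..1} fh))) {a..y}"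
    by (rule has_integral_mult_right[OF S'])
  moreover have "K * (g' \<xi> * f \<xi>) = f \<xi> * (y - \<xi>) powr (-e)" for \<xi>
    unfolding g'_def K_def using ay e by (simp add: field_simps)
  moreover have "K * (- integral {0..1} fh) = (1 / (1 - e)) * (y - a) powr (1 - e) * integral {0..1} fh"
    unfolding K_def by simp
  ultimately show ?thesis unfolding fh_def p_def by simp
qed



lemma right_rep:
  fixes \<phi> :: "real \<Rightarrow> real" and x L e :: real
  assumes L: "0 \<le> L" and e: "0 \<le> e" "e < 1" and \<phi>c: "continuous_on UNIV \<phi>"
  shows "((\<lambda>t. \<phi> t * (t - x) powr (-e)) has_integral
          ((1 / (1 - e)) * integral {0..L powr (1 - e)} (\<lambda>r. \<phi> (x + r powr (1 / (1 - e)))))) {x..x+L}"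
proof -
  define p where "p = 1 / (1 - e)"
  have p: "p \<ge> 1" "(1 - e) * p = 1" using e by (auto simp: p_def field_simps)
  define g where "g t = (t - x) powr (1 - e)" for t
  define g' where "g' t = (1 - e) * (t - x) powr (-e)" for t
  define fh where "fh r = \<phi> (x + r powr p)" for r
  have fhc: "continuous_on {0..L powr (1 - e)} fh"
    unfolding fh_def
    by (rule continuous_on_compose2[OF \<phi>c]) (use p in \<open>auto intro!: continuous_intros continuous_on_powr'\<close>)
  have gsub: "g ` {x..x+L} \<subseteq> {0..L powr (1 - e)}"
  proof (rule image_subsetI)
    fix t assume "t \<in> {x..x+L}"
    then show "g t \<in> {0..L powr (1 - e)}" unfolding g_def using e by (auto intro!: powr_mono2)
  qed
  have gc: "continuous_on {x..x+L} g"
    unfolding g_def using e by (intro continuous_on_powr' continuous_intros) auto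
  have gd: "(g has_field_derivative g' t) (at t within {x..x+L})" if "t \<in> {x..x+L} - {x}" for t
  proof -
    have t: "x < t" using that by auto
    have d0: "((\<lambda>t. t - x) has_real_derivative 1) (at t)"
      by (auto intro!: derivative_eq_intros)
    have "(g has_field_derivative (1 - e) * (t - x) powr (1 - e - of_nat 1) * 1) (at t)"
      unfolding g_def by (rule DERIV_fun_powr[OF d0]) (use t in auto)
    then have "(g has_field_derivative g' t) (at t)" unfolding g'_def by simp
    then show ?thesis by (rule has_field_derivative_at_within)
  qed
  have S: "((\<lambda>t. g' t *\<^sub>R fh (g t)) has_integral integral {g x..g (x+L)} fh) {x..x+L}"
    by (rule has_integral_substitution_strong[of "{x}", OF _ _ _ gsub fhc gc gd])
       (use L e in \<open>auto simp: g_def\<close>)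
  have fhg: "fh (g t) = \<phi> t" if "t \<in> {x..x+L}" for t
  proof -
    have "g t powr p = t - x"
      unfolding g_def using that p by (simp add: powr_powr)
    then show ?thesis unfolding fh_def by simp
  qed
  have gx: "g x = 0" and gL: "g (x + L) = L powr (1 - e)" by (auto simp: g_def)
  have S': "((\<lambda>t. g' t * \<phi> t) has_integral integral {0..L powr (1 - e)} fh) {x..x+L}"
    using S unfolding gx gL by (subst has_integral_cong[of _ _ "\<lambda>t. g' t *\<^sub>R fh (g t)"]) (auto simp: fhg)
  have "((\<lambda>t. p * (g' t * \<phi> t)) has_integral p * integral {0..L powr (1 - e)} fh) {x..x+L}"
    by (rule has_integral_mult_right[OF S'])
  moreover have "p * (g' t * \<phi> t) = \<phi> t * (t - x) powr (-e)" for t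
    unfolding g'_def p_def using e by (simp add: field_simps)
  ultimately show ?thesis unfolding fh_def p_def by simp
qed

definition Phi :: "real \<Rightarrow> real \<Rightarrow> (real \<Rightarrow> real) \<Rightarrow> real \<Rightarrow> real" where
  "Phi L e \<phi> x = (1 / (1 - e)) * integral {0..L powr (1 - e)} (\<lambda>r. \<phi> (x + r powr (1 / (1 - e))))"

lemma Phi_deriv:
  fixes \<phi> \<phi>' :: "real \<Rightarrow> real"
  assumes e: "0 \<le> e" "e < 1" and \<phi>d: "\<And>x. (\<phi> has_real_derivative \<phi>' x) (at x)"
    and \<phi>'c: "continuous_on UNIV \<phi>'"
  shows "(Phi L e \<phi> has_real_derivative Phi L e \<phi>' x) (at x)"
proof -
  define p where "p = 1 / (1 - e)"
  have p: "p > 0" using e by (auto simp: p_def)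
  define M where "M = L powr (1 - e)"
  have \<phi>c: "continuous_on UNIV \<phi>"
    using \<phi>d by (intro DERIV_continuous_on[of _ _ \<phi>']) (auto intro: has_field_derivative_at_within)
  have "((\<lambda>x. integral (cbox 0 M) (\<lambda>r. \<phi> (x + r powr p))) has_field_derivative
         integral (cbox 0 M) (\<lambda>r. \<phi>' (x + r powr p))) (at x within UNIV)"
  proof (rule leibniz_rule_field_derivative)
    fix x :: real and r :: real
    show "((\<lambda>x. \<phi> (x + r powr p)) has_field_derivative \<phi>' (x + r powr p)) (at x within UNIV)"
    proof -
      have "((\<lambda>x. \<phi> (x + r powr p)) has_real_derivative \<phi>' (x + r powr p) * 1) (at x)"
        by (rule DERIV_chain2[OF \<phi>d]) (auto intro!: derivative_eq_intros)
      then show ?thesis by simp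
    qed
  next
    fix x :: real
    show "(\<lambda>r. \<phi> (x + r powr p)) integrable_on cbox 0 M"
      by (rule integrable_continuous)
         (rule continuous_on_compose2[OF \<phi>c], use p in \<open>auto intro!: continuous_intros continuous_on_powr'\<close>)
  next
    show "continuous_on (UNIV \<times> cbox 0 M) (\<lambda>(x, r). \<phi>' (x + r powr p))"
    proof -
      have "continuous_on (UNIV \<times> cbox 0 M) (\<lambda>z. \<phi>' (fst z + snd z powr p))"
        by (rule continuous_on_compose2[OF \<phi>'c]) (use p in \<open>auto intro!: continuous_intros continuous_on_powr' simp: cbox_interval\<close>)
      then show ?thesis by (simp add: split_beta)
    qed
  qed auto
  then show ?thesis
    unfolding Phi_def p_def[symmetric] M_def[symmetric]
    by (auto intro!: derivative_eq_intros)
qed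



lemma Phi_cont:
  fixes \<phi> :: "real \<Rightarrow> real"
  assumes e: "0 \<le> e" "e < 1" and \<phi>c: "continuous_on UNIV \<phi>"
  shows "continuous_on UNIV (Phi L e \<phi>)"
proof -
  define p where "p = 1 / (1 - e)"
  have p: "p > 0" using e by (auto simp: p_def)
  define M where "M = L powr (1 - e)"
  have "continuous_on UNIV (\<lambda>x. integral (cbox 0 M) (\<lambda>r. \<phi> (x + r powr p)))"
  proof (rule integral_continuous_on_param)
    have "continuous_on (UNIV \<times> cbox 0 M) (\<lambda>z. \<phi> (fst z + snd z powr p))"
      by (rule continuous_on_compose2[OF \<phi>c]) (use p in \<open>auto intro!: continuous_intros continuous_on_powr' simp: cbox_interval\<close>)
    then show "continuous_on (UNIV \<times> cbox 0 M) (\<lambda>(x, r). \<phi> (x + r powr p))" by (simp add: split_beta)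
  qed
  then show ?thesis
    unfolding Phi_def p_def[symmetric] M_def[symmetric] cbox_interval
    by (intro continuous_intros)
qed

lemma right_eq_Phi:
  fixes \<phi> :: "real \<Rightarrow> real"
  assumes x: "a \<le> x" "x \<le> b" and e: "0 \<le> e" "e < 1" and \<phi>c: "continuous_on UNIV \<phi>"
    and z: "\<And>t. t \<ge> b \<Longrightarrow> \<phi> t = 0"
  shows "integral {x..b} (\<lambda>t. \<phi> t * (t - x) powr (-e)) = Phi (b - a) e \<phi> x"
    and "(\<lambda>t. \<phi> t * (t - x) powr (-e)) integrable_on {x..b}"
proof -
  have R: "((\<lambda>t. \<phi> t * (t - x) powr (-e)) has_integral Phi (b - a) e \<phi> x) {x..x + (b - a)}"
    unfolding Phi_def by (rule right_rep) (use x e \<phi>c in auto)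
  have I: "(\<lambda>t. \<phi> t * (t - x) powr (-e)) integrable_on {x..x + (b - a)}" using R by blast
  show "(\<lambda>t. \<phi> t * (t - x) powr (-e)) integrable_on {x..b}"
    by (rule integrable_subinterval_real[OF I]) (use x in auto)
  have "integral {x..b} (\<lambda>t. \<phi> t * (t - x) powr (-e)) + integral {b..x + (b - a)} (\<lambda>t. \<phi> t * (t - x) powr (-e))
        = integral {x..x + (b - a)} (\<lambda>t. \<phi> t * (t - x) powr (-e))"
    by (rule Henstock_Kurzweil_Integration.integral_combine[OF _ _ I]) (use x in auto)
  moreover have "integral {b..x + (b - a)} (\<lambda>t. \<phi> t * (t - x) powr (-e)) = 0"
    by (subst integral_cong[where g="\<lambda>_. 0"]) (auto simp: z)
  ultimately show "integral {x..b} (\<lambda>t. \<phi> t * (t - x) powr (-e)) = Phi (b - a) e \<phi> x"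
    using R by (simp add: integral_unique)
qed

lemma right_cont:
  fixes \<phi> :: "real \<Rightarrow> real"
  assumes e: "0 \<le> e" "e < 1" and \<phi>c: "continuous_on UNIV \<phi>"
    and z: "\<And>t. t \<ge> b \<Longrightarrow> \<phi> t = 0"
  shows "continuous_on {a..b} (\<lambda>x. integral {x..b} (\<lambda>t. \<phi> t * (t - x) powr (-e)))"
proof -
  have "continuous_on {a..b} (Phi (b - a) e \<phi>)"
    using Phi_cont[OF e \<phi>c] by (rule continuous_on_subset) auto
  then show ?thesis
    by (rule continuous_on_eq) (use right_eq_Phi(1)[where a=a and b=b, OF _ _ e \<phi>c z] in auto)
qed

lemma right_deriv:
  fixes \<phi> \<phi>' :: "real \<Rightarrow> real"
  assumes x: "a < x" "x < b" and e: "0 \<le> e" "e < 1"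
    and \<phi>d: "\<And>x. (\<phi> has_real_derivative \<phi>' x) (at x)" and \<phi>'c: "continuous_on UNIV \<phi>'"
    and z: "\<And>t. t \<ge> b \<Longrightarrow> \<phi> t = 0" and z': "\<And>t. t \<ge> b \<Longrightarrow> \<phi>' t = 0"
  shows "((\<lambda>y. integral {y..b} (\<lambda>t. \<phi> t * (t - y) powr (-e))) has_real_derivative
          integral {x..b} (\<lambda>t. \<phi>' t * (t - x) powr (-e))) (at x)"
proof -
  have \<phi>c: "continuous_on UNIV \<phi>"
    using \<phi>d by (intro DERIV_continuous_on[of _ _ \<phi>']) (auto intro: has_field_derivative_at_within)
  have "(Phi (b - a) e \<phi> has_real_derivative Phi (b - a) e \<phi>' x) (at x)"
    by (rule Phi_deriv[OF e \<phi>d \<phi>'c])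
  then have "((\<lambda>y. integral {y..b} (\<lambda>t. \<phi> t * (t - y) powr (-e))) has_real_derivative Phi (b - a) e \<phi>' x) (at x)"
    by (rule has_field_derivative_transform_within_open[where S="{a<..<b}"])
       (use x right_eq_Phi(1)[where a=a and b=b, OF _ _ e \<phi>c z] in auto)
  moreover have "Phi (b - a) e \<phi>' x = integral {x..b} (\<lambda>t. \<phi>' t * (t - x) powr (-e))"
    using right_eq_Phi(1)[where a=a and b=b, OF _ _ e \<phi>'c z'] x by auto
  ultimately show ?thesis by simp
qed



lemma left_props:
  fixes f f' :: "real \<Rightarrow> real" and a b e :: real
  assumes ab: "a < b" and e: "0 \<le> e" "e < 1"
    and fd: "\<And>x. x \<in> {a..b} \<Longrightarrow> (f has_real_derivative f' x) (at x within {a..b})"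
    and f'c: "continuous_on {a..b} f'"
  shows "continuous_on {a..b} (\<lambda>y. integral {a..y} (\<lambda>\<xi>. f \<xi> * (y - \<xi>) powr (-e)))"
    and "\<And>x. x \<in> {a<..<b} \<Longrightarrow> (\<lambda>y. integral {a..y} (\<lambda>\<xi>. f \<xi> * (y - \<xi>) powr (-e))) differentiable (at x)"
proof -
  have fc: "continuous_on {a..b} f" by (rule DERIV_continuous_on[OF fd])
  define p where "p = 1 / (1 - e)"
  have p: "p > 0" using e by (auto simp: p_def)
  define m where "m y \<theta> = y - (y - a) * \<theta> powr p" for y \<theta> :: real
  have msub: "m y \<theta> \<in> {a..y}" if "a \<le> y" "\<theta> \<in> {0..1}" for y \<theta>
  proof -
    have h: "\<theta> powr p \<le> 1" "0 \<le> \<theta> powr p" using that p by (auto intro!: powr_le1)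
    have "(y - a) * \<theta> powr p \<le> (y - a) * 1" using h that by (intro mult_left_mono) auto
    moreover have "0 \<le> (y - a) * \<theta> powr p" using h that by simp
    ultimately show ?thesis unfolding m_def by auto
  qed
  have msub': "m y \<theta> \<in> {a..b}" if "y \<in> {a..b}" "\<theta> \<in> {0..1}" for y \<theta>
    using msub[of y \<theta>] that by auto
  define J where "J y = integral {0..1} (\<lambda>\<theta>. f (m y \<theta>))" for y
  define J' where "J' y = integral {0..1} (\<lambda>\<theta>. f' (m y \<theta>) * (1 - \<theta> powr p))" for y
  have mc: "continuous_on ({a..b} \<times> {0..1}) (\<lambda>z. m (fst z) (snd z))"
    unfolding m_def using p by (auto intro!: continuous_intros continuous_on_powr')
  have Jd: "(J has_real_derivative J' y) (at y within {a..b})" if y: "y \<in> {a..b}" for y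
    unfolding J_def J'_def
  proof (rule leibniz_rule_field_derivative[where a="0::real" and b="1::real", unfolded cbox_interval])
    fix x \<theta> :: real assume x: "x \<in> {a..b}" and \<theta>: "\<theta> \<in> {0..1}"
    have d1: "((\<lambda>y. m y \<theta>) has_real_derivative (1 - \<theta> powr p)) (at x within {a..b})"
      unfolding m_def by (auto intro!: derivative_eq_intros)
    have d2: "(f has_real_derivative f' (m x \<theta>)) (at (m x \<theta>) within (\<lambda>y. m y \<theta>) ` {a..b})"
      by (rule DERIV_subset[OF fd[OF msub'[OF x \<theta>]]]) (use msub' \<theta> in auto)
    show "((\<lambda>y. f (m y \<theta>)) has_real_derivative f' (m x \<theta>) * (1 - \<theta> powr p)) (at x within {a..b})"
      using DERIV_image_chain[OF d2 d1] by (simp add: o_def)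
  next
    fix x assume x: "x \<in> {a..b}"
    show "(\<lambda>\<theta>. f (m x \<theta>)) integrable_on {0..1}"
      by (rule integrable_continuous_real, rule continuous_on_compose2[OF fc])
         (use x msub' p in \<open>auto simp: m_def intro!: continuous_intros continuous_on_powr'\<close>)
  next
    have "continuous_on ({a..b} \<times> {0..1}) (\<lambda>z. f' (m (fst z) (snd z)) * (1 - snd z powr p))"
      by (intro continuous_intros continuous_on_compose2[OF f'c mc] continuous_on_powr')
         (use msub' p in auto)
    then show "continuous_on ({a..b} \<times> {0..1}) (\<lambda>(x, \<theta>). f' (m x \<theta>) * (1 - \<theta> powr p))"
      by (simp add: split_beta)
  qed (use y in auto)
  have Jc: "continuous_on {a..b} J" by (rule DERIV_continuous_on[OF Jd])
  have rep: "integral {a..y} (\<lambda>\<xi>. f \<xi> * (y - \<xi>) powr (-e)) = p * (y - a) powr (1 - e) * J y"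
    if y: "y \<in> {a..b}" for y
  proof (cases "y = a")
    case True
    then show ?thesis by simp
  next
    case False
    then have ay: "a < y" using y by simp
    have "continuous_on {a..y} f" by (rule continuous_on_subset[OF fc]) (use y in auto)
    from left_scaled[OF ay e this] show ?thesis
      unfolding J_def m_def p_def by (simp add: integral_unique)
  qed
  show "continuous_on {a..b} (\<lambda>y. integral {a..y} (\<lambda>\<xi>. f \<xi> * (y - \<xi>) powr (-e)))"
  proof (rule continuous_on_eq[where f="\<lambda>y. p * (y - a) powr (1 - e) * J y"])
    show "continuous_on {a..b} (\<lambda>y. p * (y - a) powr (1 - e) * J y)"
      using e by (intro continuous_intros Jc continuous_on_powr') auto
  qed (use rep in auto)
  fix x assume x: "x \<in> {a<..<b}"
  have "J' x = J' x" ..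
  have Jx: "(J has_real_derivative J' x) (at x)"
    using Jd[of x] x by (simp add: at_within_Icc_at)
  have "((\<lambda>y. p * (y - a) powr (1 - e) * J y) has_real_derivative
        p * ((1 - e) * (x - a) powr (1 - e - of_nat 1) * 1) * J x + p * (x - a) powr (1 - e) * J' x) (at x)"
  proof -
    have d0: "((\<lambda>y. y - a) has_real_derivative 1) (at x)" by (auto intro!: derivative_eq_intros)
    have "((\<lambda>y. (y - a) powr (1 - e)) has_real_derivative (1 - e) * (x - a) powr (1 - e - of_nat 1) * 1) (at x)"
      by (rule DERIV_fun_powr[OF d0]) (use x in auto)
    from DERIV_mult[OF DERIV_cmult[OF this, of p] Jx] show ?thesis by (simp add: mult_ac)
  qed
  then have "((\<lambda>y. integral {a..y} (\<lambda>\<xi>. f \<xi> * (y - \<xi>) powr (-e))) has_real_derivative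
        p * ((1 - e) * (x - a) powr (1 - e - of_nat 1) * 1) * J x + p * (x - a) powr (1 - e) * J' x) (at x)"
    by (rule has_field_derivative_transform_within_open[where S="{a<..<b}"]) (use x rep in auto)
  then show "(\<lambda>y. integral {a..y} (\<lambda>\<xi>. f \<xi> * (y - \<xi>) powr (-e))) differentiable (at x)"
    unfolding real_differentiable_def by blast
qed



lemma IBP0:
  fixes f f' g g' :: "real \<Rightarrow> real"
  assumes ab: "a \<le> b" and fc: "continuous_on {a..b} f" and gc: "continuous_on {a..b} g"
    and fd: "\<And>x. x \<in> {a<..<b} \<Longrightarrow> (f has_real_derivative f' x) (at x)"
    and gd: "\<And>x. x \<in> {a<..<b} \<Longrightarrow> (g has_real_derivative g' x) (at x)"
    and g'c: "continuous_on {a..b} g'"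
    and fa: "f a * g a = 0" and fb: "f b * g b = 0"
  shows "integral {a..b} (\<lambda>x. f' x * g x) = - integral {a..b} (\<lambda>x. f x * g' x)"
proof -
  have int: "((\<lambda>x. f x * g' x) has_integral integral {a..b} (\<lambda>x. f x * g' x)) {a..b}"
    by (intro integrable_integral integrable_continuous_real continuous_intros fc g'c)
  have "((\<lambda>x. f' x * g x) has_integral - integral {a..b} (\<lambda>x. f x * g' x)) {a..b}"
  proof (rule integration_by_parts_interior[OF bounded_bilinear_mult ab fc gc])
    show "(f has_vector_derivative f' x) (at x)" if "x \<in> {a<..<b}" for x
      using fd[OF that] by (simp add: has_real_derivative_iff_has_vector_derivative)
    show "(g has_vector_derivative g' x) (at x)" if "x \<in> {a<..<b}" for x
      using gd[OF that] by (simp add: has_real_derivative_iff_has_vector_derivative)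
    show "((\<lambda>x. f x * g' x) has_integral f b * g b - f a * g a - - integral {a..b} (\<lambda>x. f x * g' x)) {a..b}"
      using int by (simp add: fa fb del: mult_eq_0_iff)
  qed
  then show ?thesis by (rule integral_unique)
qed



lemma K_lemma:
  fixes \<psi> \<psi>' :: "real \<Rightarrow> real"
  assumes sb: "s \<le> b" and g: "0 \<le> \<gamma>" "\<gamma> < 1"
    and \<psi>d: "\<And>x. (\<psi> has_real_derivative \<psi>' x) (at x)" and \<psi>'c: "continuous_on UNIV \<psi>'"
    and \<psi>b: "\<psi> b = 0" and int: "(\<lambda>\<eta>. \<psi> \<eta> * (\<eta> - s) powr (-\<gamma>)) integrable_on {s..b}"
  shows "integral {s..b} (\<lambda>\<eta>. \<psi>' \<eta> * (\<eta> - s) powr (1 - \<gamma>)) =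
         - (1 - \<gamma>) * integral {s..b} (\<lambda>\<eta>. \<psi> \<eta> * (\<eta> - s) powr (-\<gamma>))"
proof -
  have \<psi>c: "continuous_on UNIV \<psi>"
    using \<psi>d by (intro DERIV_continuous_on[of _ _ \<psi>']) (auto intro: has_field_derivative_at_within)
  define F where "F \<eta> = \<psi> \<eta> * (\<eta> - s) powr (1 - \<gamma>)" for \<eta>
  have "((\<lambda>\<eta>. \<psi>' \<eta> * (\<eta> - s) powr (1 - \<gamma>) + \<psi> \<eta> * ((1 - \<gamma>) * (\<eta> - s) powr (-\<gamma>))) has_integral F b - F s) {s..b}"
  proof (rule fundamental_theorem_of_calculus_interior[OF sb])
    show "continuous_on {s..b} F"
      unfolding F_def using g
      by (intro continuous_intros continuous_on_powr' continuous_on_subset[OF \<psi>c]) auto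
    fix x assume x: "x \<in> {s<..<b}"
    have d0: "((\<lambda>\<eta>. \<eta> - s) has_real_derivative 1) (at x)" by (auto intro!: derivative_eq_intros)
    have dp: "((\<lambda>\<eta>. (\<eta> - s) powr (1 - \<gamma>)) has_real_derivative (1 - \<gamma>) * (x - s) powr (1 - \<gamma> - of_nat 1) * 1) (at x)"
      by (rule DERIV_fun_powr[OF d0]) (use x in auto)
    have "(F has_real_derivative \<psi>' x * (x - s) powr (1 - \<gamma>) + (1 - \<gamma>) * (x - s) powr (1 - \<gamma> - of_nat 1) * 1 * \<psi> x) (at x)"
      unfolding F_def by (rule DERIV_mult[OF \<psi>d dp])
    then show "(F has_vector_derivative \<psi>' x * (x - s) powr (1 - \<gamma>) + \<psi> x * ((1 - \<gamma>) * (x - s) powr (-\<gamma>))) (at x)"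
      by (simp add: has_real_derivative_iff_has_vector_derivative mult_ac)
  qed
  moreover have "F b - F s = 0" using \<psi>b g by (simp add: F_def)
  ultimately have A: "((\<lambda>\<eta>. \<psi>' \<eta> * (\<eta> - s) powr (1 - \<gamma>) + (1 - \<gamma>) * (\<psi> \<eta> * (\<eta> - s) powr (-\<gamma>))) has_integral 0) {s..b}"
    by (simp add: mult_ac)
  have B: "((\<lambda>\<eta>. (1 - \<gamma>) * (\<psi> \<eta> * (\<eta> - s) powr (-\<gamma>))) has_integral
            (1 - \<gamma>) * integral {s..b} (\<lambda>\<eta>. \<psi> \<eta> * (\<eta> - s) powr (-\<gamma>))) {s..b}"
    by (rule has_integral_mult_right[OF integrable_integral[OF int]])
  have "((\<lambda>\<eta>. \<psi>' \<eta> * (\<eta> - s) powr (1 - \<gamma>)) has_integral 0 - (1 - \<gamma>) * integral {s..b} (\<lambda>\<eta>. \<psi> \<eta> * (\<eta> - s) powr (-\<gamma>))) {s..b}"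
    using has_integral_diff[OF A B] by simp
  then show ?thesis by (simp add: integral_unique algebra_simps)
qed

lemma K1_lemma:
  fixes \<psi> \<psi>' :: "real \<Rightarrow> real"
  assumes sb: "s \<le> b"
    and \<psi>d: "\<And>x. (\<psi> has_real_derivative \<psi>' x) (at x)"
    and \<psi>b: "\<psi> b = 0"
  shows "integral {s..b} (\<lambda>\<eta>. \<psi>' \<eta> * (\<eta> - s) powr 0) = - \<psi> s"
proof -
  have "(\<psi>' has_integral (\<psi> b - \<psi> s)) {s..b}"
    by (rule fundamental_theorem_of_calculus[OF sb])
       (use \<psi>d in \<open>auto simp: has_real_derivative_iff_has_vector_derivative[symmetric] intro: has_field_derivative_at_within\<close>)
  then have "integral {s..b} \<psi>' = - \<psi> s" using \<psi>b by (simp add: integral_unique)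
  moreover have "integral {s..b} (\<lambda>\<eta>. \<psi>' \<eta> * (\<eta> - s) powr 0) = integral {s..b} \<psi>'"
    by (rule integral_spike[where S="{s}"]) auto
  ultimately show ?thesis by simp
qed



lemma const1:
  fixes q \<beta> :: real
  assumes "0 \<le> q" "q < 1" "0 \<le> \<beta>" "\<beta> < 1"
  shows "(1 / Gamma (1 - q)) * (1 / Gamma (1 - \<beta>)) * Beta (1 - q) (1 - \<beta>) = 1 / Gamma (2 - q - \<beta>)"
proof -
  have "Gamma (1 - q) > 0" "Gamma (1 - \<beta>) > 0" using assms by auto
  moreover have "(1 - q) + (1 - \<beta>) = 2 - q - \<beta>" by simp
  ultimately show ?thesis unfolding Beta_def by (simp add: field_simps)
qed

lemma const2:
  fixes \<gamma> :: real
  assumes "0 \<le> \<gamma>" "\<gamma> < 1"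
  shows "(1 - \<gamma>) / Gamma (2 - \<gamma>) = 1 / Gamma (1 - \<gamma>)"
proof -
  have "1 - \<gamma> \<notin> \<int>\<^sub>\<le>\<^sub>0" using assms by (auto elim!: nonpos_Ints_cases)
  then have "Gamma ((1 - \<gamma>) + 1) = (1 - \<gamma>) * Gamma (1 - \<gamma>)" by (rule Gamma_plus1)
  moreover have "(1 - \<gamma>) + 1 = 2 - \<gamma>" by simp
  ultimately have h: "Gamma (2 - \<gamma>) = (1 - \<gamma>) * Gamma (1 - \<gamma>)" by simp
  have "Gamma (1 - \<gamma>) > 0" using assms by auto
  then show ?thesis unfolding h using assms by (simp add: divide_simps)
qed

lemma tfd_n_lt1: "0 \<le> e \<Longrightarrow> e < 1 \<Longrightarrow> tfd_n e = 1"
  unfolding tfd_n_def by (simp add: floor_eq_iff)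

lemma tfd_n_1: "tfd_n 1 = 2"
  unfolding tfd_n_def by simp



theorem lemma5:
  fixes a b lam q \<gamma> :: real and u v :: "real \<Rightarrow> real"
  assumes "a < b" and "lam \<ge> 0" and "0 \<le> q" and "q < \<gamma>" and "\<gamma> \<le> 1"
    and "C1_on_interval a b u" and "u a = 0"
    and "C0_inf a b v"
  shows "L2_inner a b (left_tfd a \<gamma> lam u) v =
         L2_inner a b (left_tfd a q lam u) (right_tfd b (\<gamma> - q) lam v)"
proof -
  note ab = \<open>a < b\<close>
  obtain u' where u'c: "continuous_on {a..b} u'"
    and ud: "\<And>x. x \<in> {a..b} \<Longrightarrow> (u has_real_derivative u' x) (at x within {a..b})"
    using assms(6) unfolding C1_on_interval_def by blast
  obtain c d where cd: "a < c" "c \<le> d" "d < b" and vz: "\<And>x. x \<notin> {c..d} \<Longrightarrow> v x = 0"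
    using assms(8) unfolding C0_inf_def by blast
  have vdiff: "\<And>k x. (deriv ^^ k) v differentiable (at x)"
    using assms(8) unfolding C0_inf_def by blast
  define v1 where "v1 = deriv v"
  define v2 where "v2 = deriv v1"
  have vd: "\<And>x. (v has_real_derivative v1 x) (at x)"
    using vdiff[of 0] unfolding v1_def by (simp add: DERIV_deriv_iff_real_differentiable)
  have v1d: "\<And>x. (v1 has_real_derivative v2 x) (at x)"
    using vdiff[of 1] unfolding v1_def v2_def by (simp add: DERIV_deriv_iff_real_differentiable)
  have v2diff: "\<And>x. v2 differentiable (at x)"
    using vdiff[of 2] unfolding v1_def v2_def by (simp add: numeral_2_eq_2)
  have vc: "continuous_on UNIV v"
    using vd by (intro DERIV_continuous_on[of _ _ v1]) (auto intro: has_field_derivative_at_within)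
  have v1c: "continuous_on UNIV v1"
    using v1d by (intro DERIV_continuous_on[of _ _ v2]) (auto intro: has_field_derivative_at_within)
  have v2c: "continuous_on UNIV v2"
    using v2diff by (intro continuous_at_imp_continuous_on ballI differentiable_imp_continuous_within) auto
  have v0z: "\<And>t. t > d \<Longrightarrow> v t = 0" using vz by auto
  have v1z: "\<And>t. t > d \<Longrightarrow> v1 t = 0"
  proof -
    fix t assume t: "t > d"
    have "((\<lambda>_. 0) has_real_derivative 0) (at t)" by simp
    then have "(v has_real_derivative 0) (at t)"
      by (rule has_field_derivative_transform_within_open[where S="{d<..}"]) (use t v0z in auto)
    then show "v1 t = 0" using vd[of t] DERIV_unique by blast
  qed
  have v2z: "\<And>t. t > d \<Longrightarrow> v2 t = 0"
  proof -
    fix t assume t: "t > d"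
    have "((\<lambda>_. 0) has_real_derivative 0) (at t)" by simp
    then have "(v1 has_real_derivative 0) (at t)"
      by (rule has_field_derivative_transform_within_open[where S="{d<..}"]) (use t v1z in auto)
    then show "v2 t = 0" using v1d[of t] DERIV_unique by blast
  qed
  define z where "z t = exp (- lam * t) * v t" for t
  define z1 where "z1 t = exp (- lam * t) * (v1 t - lam * v t)" for t
  define z2 where "z2 t = exp (- lam * t) * (v2 t - 2 * lam * v1 t + lam ^ 2 * v t)" for t
  have zd: "\<And>x. (z has_real_derivative z1 x) (at x)"
    unfolding z_def z1_def by (auto intro!: derivative_eq_intros vd simp: algebra_simps)
  have z1d: "\<And>x. (z1 has_real_derivative z2 x) (at x)"
    unfolding z1_def z2_def by (auto intro!: derivative_eq_intros vd v1d simp: algebra_simps power2_eq_square)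
  have zc: "continuous_on UNIV z" unfolding z_def by (intro continuous_intros vc)
  have z1c: "continuous_on UNIV z1" unfolding z1_def by (intro continuous_intros vc v1c)
  have z2c: "continuous_on UNIV z2" unfolding z2_def by (intro continuous_intros vc v1c v2c)
  have zb: "\<And>t. t \<ge> b \<Longrightarrow> z t = 0" using v0z cd by (auto simp: z_def)
  have z1b: "\<And>t. t \<ge> b \<Longrightarrow> z1 t = 0" using v0z v1z cd by (auto simp: z1_def)
  have z2b: "\<And>t. t \<ge> b \<Longrightarrow> z2 t = 0" using v0z v1z v2z cd by (auto simp: z2_def)
  have za: "z a = 0" using vz cd by (auto simp: z_def)
  define w where "w t = exp (lam * t) * u t" for t
  define w1 where "w1 t = exp (lam * t) * (lam * u t + u' t)" for t
  have wd: "\<And>x. x \<in> {a..b} \<Longrightarrow> (w has_real_derivative w1 x) (at x within {a..b})"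
    unfolding w_def w1_def by (auto intro!: derivative_eq_intros ud simp: algebra_simps)
  have uc: "continuous_on {a..b} u" by (rule DERIV_continuous_on[OF ud])
  have wc: "continuous_on {a..b} w" unfolding w_def by (intro continuous_intros uc)
  have w1c: "continuous_on {a..b} w1" unfolding w1_def by (intro continuous_intros uc u'c)
  have wa: "w a = 0" using assms(7) by (simp add: w_def)
  define wb where "wb t = w (max a (min b t))" for t
  have wbc: "continuous_on UNIV wb"
    unfolding wb_def by (rule continuous_on_compose2[OF wc]) (use ab in \<open>auto intro!: continuous_intros\<close>)
  have wbw: "\<And>t. t \<in> {a..b} \<Longrightarrow> wb t = w t" by (simp add: wb_def)
  have wbm: "wb \<in> borel_measurable borel" by (rule borel_measurable_continuous_onI[OF wbc])
  have wbi: "set_integrable lborel {a..b} wb"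
    unfolding set_integrable_def
    by (rule borel_integrable_compact) (auto intro: continuous_on_subset[OF wbc])
  define Pl where "Pl e y = integral {a..y} (\<lambda>\<xi>. w \<xi> * (y - \<xi>) powr (-e))" for e y
  define Rr where "Rr e \<phi> y = integral {y..b} (\<lambda>t. \<phi> t * (t - y) powr (-e))" for e and \<phi> :: "real \<Rightarrow> real" and y
  have Plc: "continuous_on {a..b} (Pl e)" if "0 \<le> e" "e < 1" for e
    unfolding Pl_def using left_props(1)[OF ab that wd w1c] .
  have Pld: "(Pl e has_real_derivative deriv (Pl e) x) (at x)" if "0 \<le> e" "e < 1" "x \<in> {a<..<b}" for e x
    unfolding DERIV_deriv_iff_real_differentiable Pl_def using left_props(2)[OF ab that(1,2) wd w1c that(3)] .
  have Pla: "Pl e a = 0" for e by (simp add: Pl_def)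
  have left_eq: "left_tfd a e lam u x = exp (- lam * x) / Gamma (1 - e) * deriv (Pl e) x" if "0 \<le> e" "e < 1" for e x
  proof -
    have "(\<lambda>y. integral {a..y} (\<lambda>\<xi>. exp (lam * \<xi>) * u \<xi> / (y - \<xi>) powr e)) = Pl e"
      unfolding Pl_def w_def by (simp add: powr_minus divide_inverse)
    then show ?thesis unfolding left_tfd_def Let_def tfd_n_lt1[OF that] by simp
  qed
  have right_eq: "right_tfd b e lam v x = - (exp (lam * x) / Gamma (1 - e) * deriv (Rr e z) x)" if "0 \<le> e" "e < 1" for e x
  proof -
    have "(\<lambda>y. integral {y..b} (\<lambda>\<xi>. exp (- lam * \<xi>) * v \<xi> / (\<xi> - y) powr e)) = Rr e z"
      unfolding Rr_def z_def by (simp add: powr_minus divide_inverse)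
    then show ?thesis unfolding right_tfd_def Let_def tfd_n_lt1[OF that] by simp
  qed
  have left_eq1: "left_tfd a 1 lam u x = exp (- lam * x) * deriv (deriv (\<lambda>y. integral {a..y} w)) x" for x
  proof -
    have "(\<lambda>y. integral {a..y} (\<lambda>\<xi>. exp (lam * \<xi>) * u \<xi> / (y - \<xi>) powr 0)) = (\<lambda>y. integral {a..y} w)"
    proof
      fix y show "integral {a..y} (\<lambda>\<xi>. exp (lam * \<xi>) * u \<xi> / (y - \<xi>) powr 0) = integral {a..y} w"
        by (rule integral_spike[where S="{y}"]) (auto simp: w_def)
    qed
    then show ?thesis unfolding left_tfd_def Let_def tfd_n_1 by (simp add: numeral_2_eq_2)
  qed
  have right_eq1: "right_tfd b 1 lam v x = exp (lam * x) * deriv (deriv (\<lambda>y. integral {y..b} z)) x" for x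
  proof -
    have "(\<lambda>y. integral {y..b} (\<lambda>\<xi>. exp (- lam * \<xi>) * v \<xi> / (\<xi> - y) powr 0)) = (\<lambda>y. integral {y..b} z)"
    proof
      fix y show "integral {y..b} (\<lambda>\<xi>. exp (- lam * \<xi>) * v \<xi> / (\<xi> - y) powr 0) = integral {y..b} z"
        by (rule integral_spike[where S="{y}"]) (auto simp: z_def)
    qed
    then show ?thesis unfolding right_tfd_def Let_def tfd_n_1 by (simp add: numeral_2_eq_2)
  qed
  define Iw where "Iw y = integral {a..y} w" for y
  define Jz where "Jz y = integral {y..b} z" for y
  have Iwd: "(Iw has_real_derivative w x) (at x)" if x: "x \<in> {a<..<b}" for x
    using integral_has_real_derivative[OF wc, of x] x unfolding Iw_def[abs_def]
    by (simp add: at_within_Icc_at)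
  have Iw_deriv: "deriv Iw x = w x" if "x \<in> {a<..<b}" for x
    using Iwd[OF that] by (rule DERIV_imp_deriv)
  have wdat: "(w has_real_derivative w1 x) (at x)" if x: "x \<in> {a<..<b}" for x
    using wd[of x] x by (simp add: at_within_Icc_at)
  have Iw_dd: "deriv (deriv Iw) x = w1 x" if x: "x \<in> {a<..<b}" for x
  proof -
    have "(deriv Iw has_real_derivative w1 x) (at x)"
      by (rule has_field_derivative_transform_within_open[OF wdat[OF x], where S="{a<..<b}"])
         (use x Iw_deriv in auto)
    then show ?thesis by (rule DERIV_imp_deriv)
  qed
  have Jzd: "(Jz has_real_derivative - z x) (at x)" if x: "x \<in> {a<..<b}" for x
    using integral_has_real_derivative'[OF continuous_on_subset[OF zc], of a b x] x unfolding Jz_def[abs_def]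
    by (simp add: at_within_Icc_at)
  have Jz_dd: "deriv (deriv Jz) x = - z1 x" if x: "x \<in> {a<..<b}" for x
  proof -
    have "((\<lambda>y. - z y) has_real_derivative - z1 x) (at x)"
      using zd[of x] by (auto intro!: derivative_eq_intros)
    then have "(deriv Jz has_real_derivative - z1 x) (at x)"
      by (rule has_field_derivative_transform_within_open[where S="{a<..<b}"])
         (use x in \<open>auto intro!: DERIV_imp_deriv[symmetric] Jzd\<close>)
    then show ?thesis by (rule DERIV_imp_deriv)
  qed
  have Rrz: "deriv (Rr e z) x = Rr e z1 x" if "0 \<le> e" "e < 1" "x \<in> {a<..<b}" for e x
  proof -
    have "(Rr e z has_real_derivative Rr e z1 x) (at x)"
      unfolding Rr_def using right_deriv[of a x b e z z1] that zd z1c zb z1b by auto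
    then show ?thesis by (rule DERIV_imp_deriv)
  qed
  have Rrz1d: "(Rr e z1 has_real_derivative Rr e z2 x) (at x)" if "0 \<le> e" "e < 1" "x \<in> {a<..<b}" for e x
    unfolding Rr_def using right_deriv[of a x b e z1 z2] that z1d z2c z1b z2b by auto
  have Rrc1: "continuous_on {a..b} (Rr e z1)" if "0 \<le> e" "e < 1" for e
    unfolding Rr_def using right_cont[OF that z1c z1b] by simp
  have Rrc2: "continuous_on {a..b} (Rr e z2)" if "0 \<le> e" "e < 1" for e
    unfolding Rr_def using right_cont[OF that z2c z2b] by simp
  have Pl_wb: "Pl e t = integral {a..t} (\<lambda>s. wb s * (t - s) powr (-e))" if "t \<in> {a..b}" for e t
    unfolding Pl_def by (rule integral_cong) (use that wbw in auto)
  have g0: "0 \<le> \<gamma>" using assms(3,4) by simp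
  have L_lt1: "L2_inner a b (left_tfd a \<gamma> lam u) v = - (1 / Gamma (1 - \<gamma>)) * integral {a..b} (\<lambda>s. wb s * Rr \<gamma> z1 s)"
    if g1: "\<gamma> < 1"
  proof -
    have "L2_inner a b (left_tfd a \<gamma> lam u) v = integral {a..b} (\<lambda>x. (1 / Gamma (1 - \<gamma>)) * (deriv (Pl \<gamma>) x * z x))"
      unfolding L2_inner_def left_eq[OF g0 g1] z_def by (simp add: mult_ac)
    also have "\<dots> = (1 / Gamma (1 - \<gamma>)) * integral {a..b} (\<lambda>x. deriv (Pl \<gamma>) x * z x)"
      by simp
    also have "integral {a..b} (\<lambda>x. deriv (Pl \<gamma>) x * z x) = - integral {a..b} (\<lambda>x. Pl \<gamma> x * z1 x)"
      by (rule IBP0) (use ab Plc[OF g0 g1] Pld[OF g0 g1] continuous_on_subset[OF zc] zd continuous_on_subset[OF z1c] Pla zb in auto)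
    also have "integral {a..b} (\<lambda>x. Pl \<gamma> x * z1 x) = integral {a..b} (\<lambda>t. z1 t * integral {a..t} (\<lambda>s. wb s * (t - s) powr (-\<gamma>)))"
      by (rule integral_cong) (simp add: Pl_wb)
    also have "\<dots> = integral {a..b} (\<lambda>s. wb s * integral {s..b} (\<lambda>t. z1 t * (t - s) powr (-\<gamma>)))"
      by (rule GF[symmetric, OF _ g0 g1 wbm wbi z1c]) (use ab in simp)
    finally show ?thesis unfolding Rr_def by simp
  qed
  have L_1: "L2_inner a b (left_tfd a \<gamma> lam u) v = - integral {a..b} (\<lambda>s. wb s * z1 s)"
    if g1: "\<gamma> = 1"
  proof -
    have "L2_inner a b (left_tfd a \<gamma> lam u) v = integral {a..b} (\<lambda>x. w1 x * z x)"
      unfolding L2_inner_def g1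
    proof (rule integral_spike[where S="{a,b}"])
      fix x assume "x \<in> {a..b} - {a,b}"
      then have x: "x \<in> {a<..<b}" by auto
      show "w1 x * z x = left_tfd a 1 lam u x * v x"
        unfolding left_eq1 Iw_def[symmetric] Iw_dd[OF x] z_def by simp
    qed auto
    also have "\<dots> = - integral {a..b} (\<lambda>x. w x * z1 x)"
      by (rule IBP0) (use ab wc wdat continuous_on_subset[OF zc] zd continuous_on_subset[OF z1c] wa zb in auto)
    also have "integral {a..b} (\<lambda>x. w x * z1 x) = integral {a..b} (\<lambda>s. wb s * z1 s)"
      by (rule integral_cong) (simp add: wbw)
    finally show ?thesis .
  qed
  define \<beta> where "\<beta> = \<gamma> - q"
  have b0: "0 \<le> \<beta>" using assms(4) by (simp add: \<beta>_def)
  have q1: "q < 1" using assms(4,5) by simp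
  define Kf where "Kf s = integral {s..b} (\<lambda>t. z2 t * (t - s) powr (1 - q - \<beta>))" for s
  have R_lt: "L2_inner a b (left_tfd a q lam u) (right_tfd b \<beta> lam v) =
      (1 / Gamma (1 - q)) * (1 / Gamma (1 - \<beta>)) * Beta (1 - q) (1 - \<beta>) * integral {a..b} (\<lambda>s. wb s * Kf s)"
    if b1: "\<beta> < 1"
  proof -
    define C where "C = (1 / Gamma (1 - q)) * (1 / Gamma (1 - \<beta>))"
    have "L2_inner a b (left_tfd a q lam u) (right_tfd b \<beta> lam v) =
          integral {a..b} (\<lambda>x. - C * (deriv (Pl q) x * Rr \<beta> z1 x))"
      unfolding L2_inner_def
    proof (rule integral_spike[where S="{a,b}"])
      fix x assume "x \<in> {a..b} - {a,b}"
      then have x: "x \<in> {a<..<b}" by auto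
      show "- C * (deriv (Pl q) x * Rr \<beta> z1 x) = left_tfd a q lam u x * right_tfd b \<beta> lam v x"
        unfolding left_eq[OF assms(3) q1] right_eq[OF b0 b1] Rrz[OF b0 b1 x] C_def
        by (simp add: exp_minus field_simps)
    qed auto
    also have "\<dots> = - C * integral {a..b} (\<lambda>x. deriv (Pl q) x * Rr \<beta> z1 x)"
      by simp
    also have "integral {a..b} (\<lambda>x. deriv (Pl q) x * Rr \<beta> z1 x) = - integral {a..b} (\<lambda>x. Pl q x * Rr \<beta> z2 x)"
    proof (rule IBP0)
      show "Pl q b * Rr \<beta> z1 b = 0" by (simp add: Rr_def)
    qed (use ab Plc[OF assms(3) q1] Pld[OF assms(3) q1] Rrc1[OF b0 b1] Rrz1d[OF b0 b1] Rrc2[OF b0 b1] Pla in auto)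
    also have "integral {a..b} (\<lambda>x. Pl q x * Rr \<beta> z2 x) =
               integral {a..b} (\<lambda>t. Phi (b - a) \<beta> z2 t * integral {a..t} (\<lambda>s. wb s * (t - s) powr (-q)))"
    proof (rule integral_cong)
      fix t assume t: "t \<in> {a..b}"
      have "Rr \<beta> z2 t = Phi (b - a) \<beta> z2 t"
        unfolding Rr_def using right_eq_Phi(1)[where a=a and b=b, OF _ _ b0 b1 z2c z2b] t by auto
      then show "Pl q t * Rr \<beta> z2 t = Phi (b - a) \<beta> z2 t * integral {a..t} (\<lambda>s. wb s * (t - s) powr (-q))"
        using Pl_wb[OF t] by simp
    qed
    also have "\<dots> = integral {a..b} (\<lambda>s. wb s * integral {s..b} (\<lambda>t. Phi (b - a) \<beta> z2 t * (t - s) powr (-q)))"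
      by (rule GF[symmetric, OF _ assms(3) q1 wbm wbi Phi_cont[OF b0 b1 z2c]]) (use ab in simp)
    also have "\<dots> = integral {a..b} (\<lambda>s. Beta (1 - q) (1 - \<beta>) * (wb s * Kf s))"
    proof (rule integral_cong)
      fix s assume s: "s \<in> {a..b}"
      have "integral {s..b} (\<lambda>t. Phi (b - a) \<beta> z2 t * (t - s) powr (-q)) =
            integral {s..b} (\<lambda>x. (x - s) powr (-q) * integral {x..b} (\<lambda>t. z2 t * (t - x) powr (-\<beta>)))"
      proof (rule integral_cong)
        fix x assume x: "x \<in> {s..b}"
        have "integral {x..b} (\<lambda>t. z2 t * (t - x) powr (-\<beta>)) = Phi (b - a) \<beta> z2 x"
          using right_eq_Phi(1)[where a=a and b=b, OF _ _ b0 b1 z2c z2b] x s by auto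
        then show "Phi (b - a) \<beta> z2 x * (x - s) powr (-q) = (x - s) powr (-q) * integral {x..b} (\<lambda>t. z2 t * (t - x) powr (-\<beta>))"
          by simp
      qed
      also have "\<dots> = Beta (1 - q) (1 - \<beta>) * Kf s"
        unfolding Kf_def by (rule semigroup[OF _ assms(3) q1 b0 b1 z2c]) (use s in auto)
      finally show "wb s * integral {s..b} (\<lambda>t. Phi (b - a) \<beta> z2 t * (t - s) powr (-q)) = Beta (1 - q) (1 - \<beta>) * (wb s * Kf s)"
        by simp
    qed
    also have "\<dots> = Beta (1 - q) (1 - \<beta>) * integral {a..b} (\<lambda>s. wb s * Kf s)"
      by simp
    finally show ?thesis unfolding C_def by simp
  qed
  have R_eq1: "L2_inner a b (left_tfd a q lam u) (right_tfd b \<beta> lam v) = - integral {a..b} (\<lambda>s. wb s * z1 s)"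
    if q0: "q = 0" and g1: "\<gamma> = 1"
  proof -
    have b1: "\<beta> = 1" using q0 g1 by (simp add: \<beta>_def)
    have Pl0: "Pl 0 = Iw"
    proof
      fix y show "Pl 0 y = Iw y"
        unfolding Pl_def Iw_def by (rule integral_spike[where S="{y}"]) auto
    qed
    have "L2_inner a b (left_tfd a q lam u) (right_tfd b \<beta> lam v) = integral {a..b} (\<lambda>x. - (w x * z1 x))"
      unfolding L2_inner_def
    proof (rule integral_spike[where S="{a,b}"])
      fix x assume "x \<in> {a..b} - {a,b}"
      then have x: "x \<in> {a<..<b}" by auto
      show "- (w x * z1 x) = left_tfd a q lam u x * right_tfd b \<beta> lam v x"
        unfolding q0 b1 left_eq[of 0, simplified] right_eq1 Jz_def[symmetric] Jz_dd[OF x] Pl0 Iw_deriv[OF x]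
        by (simp add: exp_minus field_simps)
    qed auto
    also have "\<dots> = - integral {a..b} (\<lambda>x. w x * z1 x)" by simp
    also have "integral {a..b} (\<lambda>x. w x * z1 x) = integral {a..b} (\<lambda>s. wb s * z1 s)"
      by (rule integral_cong) (simp add: wbw)
    finally show ?thesis .
  qed
  have goal_eq: "right_tfd b (\<gamma> - q) lam v = right_tfd b \<beta> lam v" by (simp add: \<beta>_def)
  show ?thesis
  proof (cases "\<gamma> < 1")
    case True
    have b1: "\<beta> < 1" using True assms(3) by (simp add: \<beta>_def)
    have Kf_eq: "Kf s = - (1 - \<gamma>) * Rr \<gamma> z1 s" if s: "s \<in> {a..b}" for s
    proof -
      have e: "1 - q - \<beta> = 1 - \<gamma>" by (simp add: \<beta>_def)
      have int: "(\<lambda>\<eta>. z1 \<eta> * (\<eta> - s) powr (-\<gamma>)) integrable_on {s..b}"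
        using right_eq_Phi(2)[where a=a and b=b, OF _ _ g0 True z1c z1b] s by auto
      show ?thesis unfolding Kf_def e Rr_def
        by (rule K_lemma[OF _ g0 True z1d z2c z1b[OF order_refl] int]) (use s in auto)
    qed
    have I: "integral {a..b} (\<lambda>s. wb s * Kf s) = - (1 - \<gamma>) * integral {a..b} (\<lambda>s. wb s * Rr \<gamma> z1 s)"
    proof -
      have "integral {a..b} (\<lambda>s. wb s * Kf s) = integral {a..b} (\<lambda>s. - (1 - \<gamma>) * (wb s * Rr \<gamma> z1 s))"
        by (rule integral_cong) (simp add: Kf_eq)
      then show ?thesis by simp
    qed
    have C: "(1 / Gamma (1 - q)) * (1 / Gamma (1 - \<beta>)) * Beta (1 - q) (1 - \<beta>) = 1 / Gamma (2 - \<gamma>)"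
      using const1[OF assms(3) q1 b0 b1] by (simp add: \<beta>_def)
    have C2: "(1 - \<gamma>) / Gamma (2 - \<gamma>) = 1 / Gamma (1 - \<gamma>)" by (rule const2[OF g0 True])
    have "1 / Gamma (2 - \<gamma>) * (- (1 - \<gamma>) * X) = - ((1 - \<gamma>) / Gamma (2 - \<gamma>)) * X" for X
      by (simp add: algebra_simps minus_divide_left)
    then show ?thesis unfolding goal_eq L_lt1[OF True] R_lt[OF b1] C I C2 by simp
  next
    case False
    then have g1: "\<gamma> = 1" using assms(5) by simp
    show ?thesis
    proof (cases "q = 0")
      case True
      show ?thesis unfolding goal_eq L_1[OF g1] R_eq1[OF True g1] ..
    next
      case False
      then have b1: "\<beta> < 1" using g1 assms(3) by (simp add: \<beta>_def)
      have Kf_eq: "Kf s = - z1 s" if s: "s \<in> {a..b}" for s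
      proof -
        have e: "1 - q - \<beta> = 0" using g1 by (simp add: \<beta>_def)
        show ?thesis unfolding Kf_def e
          by (rule K1_lemma[OF _ z1d z1b[OF order_refl]]) (use s in auto)
      qed
      have I: "integral {a..b} (\<lambda>s. wb s * Kf s) = - integral {a..b} (\<lambda>s. wb s * z1 s)"
      proof -
        have "integral {a..b} (\<lambda>s. wb s * Kf s) = integral {a..b} (\<lambda>s. - (wb s * z1 s))"
          by (rule integral_cong) (simp add: Kf_eq)
        then show ?thesis by simp
      qed
      have e2: "2 - q - \<beta> = 1" using g1 by (simp add: \<beta>_def)
      have C: "(1 / Gamma (1 - q)) * (1 / Gamma (1 - \<beta>)) * Beta (1 - q) (1 - \<beta>) = 1"
        by (subst const1[OF assms(3) q1 b0 b1]) (simp add: e2)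
      show ?thesis unfolding goal_eq L_1[OF g1] R_lt[OF b1] C I by simp
    qed
  qed
qed


end
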